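(* Let $A$ be a finite-dimensional local $k$-algebra with $A/J_A\cong k$, $X$ a finite-dimensional $(A,k)$-bimodule (with central $k$-action), and $\Lambda:=\begin{pmatrix}A&X\\0&k\end{pmatrix}$. Assume $(1,-1)\in K_0(\operatorname{proj}\Lambda)$ is rigid. (a) There exists $h\in X$ with $X=Ah$. (b) Let $\Lambda':=\begin{pmatrix}A&J_AX\\0&k\end{pmatrix}$ and $t\ge1$. If $(1,-t)\in K_0(\operatorname{proj}\Lambda)$ is rigid, then $(1,1-t)\in K_0(\operatorname{proj}\Lambda')$ is rigid.
   Context: $k$ a field, $J_A$ the Jacobson radical. $K_0(\operatorname{proj}\Lambda)$ is identified with $\mathbb{Z}^2$ via $[A\ X]\mapsto(1,0)$, $[0\ k]\mapsto(0,1)$ (similarly for $\Lambda'$). An element of $K_0(\operatorname{proj}\Lambda)$ is rigid if it equals the $g$-vector $[T^0]-[T^{-1}]$ of some 2-term presilting complex $T$ in $K^b(\operatorname{proj}\Lambda)$ (concentrated in degrees $-1,0$ with $\operatorname{Hom}(T,T[\ell])=0$ for all $\ell>0$). *)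

theory Defs
  imports Main "HOL.Vector_Spaces"
begin

definition k_algebra :: "('k::field \<Rightarrow> 'a::ring_1 \<Rightarrow> 'a) \<Rightarrow> bool" where
  "k_algebra sA \<longleftrightarrow> vector_space sA \<and>
     (\<forall>c a b. sA c (a * b) = sA c a * b \<and> sA c (a * b) = a * sA c b)"

definition fin_dim :: "('k::field \<Rightarrow> 'b::ab_group_add \<Rightarrow> 'b) \<Rightarrow> bool" where
  "fin_dim s \<longleftrightarrow> vector_space s \<and> (\<exists>B. finite B \<and> module.span s B = UNIV)"

definition left_ideal :: "'a::ring_1 set \<Rightarrow> bool" where
  "left_ideal I \<longleftrightarrow> 0 \<in> I \<and> (\<forall>x\<in>I. \<forall>y\<in>I. x + y \<in> I) \<and> (\<forall>x\<in>I. - x \<in> I)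
     \<and> (\<forall>r. \<forall>x\<in>I. r * x \<in> I)"

definition maximal_left_ideal :: "'a::ring_1 set \<Rightarrow> bool" where
  "maximal_left_ideal I \<longleftrightarrow> left_ideal I \<and> I \<noteq> UNIV \<and>
     (\<forall>L. left_ideal L \<and> I \<subseteq> L \<longrightarrow> L = I \<or> L = UNIV)"

definition jacobson :: "'a::ring_1 set" where
  "jacobson = \<Inter> {I. maximal_left_ideal I}"

definition local_ring :: "'a::ring_1 itself \<Rightarrow> bool" where
  "local_ring _ \<longleftrightarrow> (\<exists>!I::'a set. maximal_left_ideal I)"

text \<open>A/J_A \<cong> k as k-algebras: the structure map k \<rightarrow> A/J_A, c \<mapsto> c\<cdot>1 + J_A, is bijective.\<close>
definition residue_field_is_k :: "('k::field \<Rightarrow> 'a::ring_1 \<Rightarrow> 'a) \<Rightarrow> bool" where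
  "residue_field_is_k sA \<longleftrightarrow> (\<forall>a. \<exists>!c. a - sA c 1 \<in> jacobson)"

text \<open>(A,k)-bimodule X with central k-action: X a k-vector space (sX = the k-action),
  actA a left A-module structure, and (c\<cdot>1_A) x = x c.\<close>
definition bimodule :: "('k::field \<Rightarrow> 'a::ring_1 \<Rightarrow> 'a) \<Rightarrow> ('k \<Rightarrow> 'x::ab_group_add \<Rightarrow> 'x)
    \<Rightarrow> ('a \<Rightarrow> 'x \<Rightarrow> 'x) \<Rightarrow> bool" where
  "bimodule sA sX actA \<longleftrightarrow> vector_space sX \<and>
     (\<forall>a b x. actA (a + b) x = actA a x + actA b x) \<and>
     (\<forall>a x y. actA a (x + y) = actA a x + actA a y) \<and>
     (\<forall>a b x. actA (a * b) x = actA a (actA b x)) \<and>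
     (\<forall>x. actA 1 x = x) \<and>
     (\<forall>c x. actA (sA c 1) x = sX c x)"

inductive_set JX :: "('a::ring_1 \<Rightarrow> 'x::ab_group_add \<Rightarrow> 'x) \<Rightarrow> 'x set" for actA where
  JX_zero: "0 \<in> JX actA"
| JX_gen: "a \<in> jacobson \<Longrightarrow> actA a x \<in> JX actA"
| JX_add: "u \<in> JX actA \<Longrightarrow> v \<in> JX actA \<Longrightarrow> u + v \<in> JX actA"

text \<open>For a sub-bimodule M \<subseteq> X (given as a set; M = X or M = J_A X) let
  \<Gamma> = (A M; 0 k), acting on right modules. proj \<Gamma> is Krull-Schmidt with indecomposables
  P1 = e1\<Gamma> = (A M) and P2 = e2\<Gamma> = (0 k), and Hom(P_i,P_j) = e_j \<Gamma> e_i: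
  Hom(P1,P1) = A, Hom(P2,P1) = M, Hom(P1,P2) = 0, Hom(P2,P2) = k.
  A morphism P1^a \<oplus> P2^b \<rightarrow> P1^a' \<oplus> P2^b' is a block matrix with an a'\<times>a block in A,
  an a'\<times>b block in M, and a b'\<times>b block in k; composition is matrix multiplication.\<close>

type_synonym ('a,'x,'k) tmor = "(nat \<Rightarrow> nat \<Rightarrow> 'a) \<times> (nat \<Rightarrow> nat \<Rightarrow> 'x) \<times> (nat \<Rightarrow> nat \<Rightarrow> 'k)"

definition is_mor :: "'x set \<Rightarrow> nat \<times> nat \<Rightarrow> nat \<times> nat \<Rightarrow> ('a,'x,'k) tmor \<Rightarrow> bool" where
  "is_mor M src tgt f \<longleftrightarrow> (\<forall>i<fst tgt. \<forall>j<snd src. fst (snd f) i j \<in> M)"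

definition mor_eq :: "nat \<times> nat \<Rightarrow> nat \<times> nat \<Rightarrow> ('a,'x,'k) tmor \<Rightarrow> ('a,'x,'k) tmor \<Rightarrow> bool" where
  "mor_eq src tgt f g \<longleftrightarrow>
     (\<forall>i<fst tgt. \<forall>j<fst src. fst f i j = fst g i j) \<and>
     (\<forall>i<fst tgt. \<forall>j<snd src. fst (snd f) i j = fst (snd g) i j) \<and>
     (\<forall>i<snd tgt. \<forall>j<snd src. snd (snd f) i j = snd (snd g) i j)"

text \<open>Composition f \<circ> g where g : src \<rightarrow> mid and f : mid \<rightarrow> tgt.\<close>
definition mor_comp :: "('k::field \<Rightarrow> 'x::ab_group_add \<Rightarrow> 'x) \<Rightarrow> ('a::ring_1 \<Rightarrow> 'x \<Rightarrow> 'x)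
    \<Rightarrow> nat \<times> nat \<Rightarrow> ('a,'x,'k) tmor \<Rightarrow> ('a,'x,'k) tmor \<Rightarrow> ('a,'x,'k) tmor" where
  "mor_comp sX actA mid f g =
     ((\<lambda>i j. \<Sum>l<fst mid. fst f i l * fst g l j),
      (\<lambda>i j. (\<Sum>l<fst mid. actA (fst f i l) (fst (snd g) l j))
           + (\<Sum>l<snd mid. sX (snd (snd g) l j) (fst (snd f) i l))),
      (\<lambda>i j. \<Sum>l<snd mid. snd (snd f) i l * snd (snd g) l j))"

definition mor_add :: "('a::ring_1,'x::ab_group_add,'k::field) tmor \<Rightarrow> ('a,'x,'k) tmor \<Rightarrow> ('a,'x,'k) tmor" where
  "mor_add f g = ((\<lambda>i j. fst f i j + fst g i j),
                  (\<lambda>i j. fst (snd f) i j + fst (snd g) i j),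
                  (\<lambda>i j. snd (snd f) i j + snd (snd g) i j))"

text \<open>A 2-term complex T = (T^{-1} \<rightarrow> T^0) with T^0 = P1^{a0} \<oplus> P2^{b0} (= t0),
  T^{-1} = P1^{a1} \<oplus> P2^{b1} (= t1) and differential d. It is presilting iff
  Hom_K(T,T[1]) = 0 (Hom(T,T[l]) = 0 for l \<ge> 2 holds automatically), i.e. every
  f : T^{-1} \<rightarrow> T^0 is null-homotopic: f = g \<circ> d + d \<circ> h for some
  g \<in> End(T^0), h \<in> End(T^{-1}).\<close>
definition presilting :: "('k::field \<Rightarrow> 'x::ab_group_add \<Rightarrow> 'x) \<Rightarrow> ('a::ring_1 \<Rightarrow> 'x \<Rightarrow> 'x)
    \<Rightarrow> 'x set \<Rightarrow> nat \<times> nat \<Rightarrow> nat \<times> nat \<Rightarrow> ('a,'x,'k) tmor \<Rightarrow> bool" where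
  "presilting sX actA M t0 t1 d \<longleftrightarrow> is_mor M t1 t0 d \<and>
     (\<forall>f. is_mor M t1 t0 f \<longrightarrow>
        (\<exists>g h. is_mor M t0 t0 g \<and> is_mor M t1 t1 h \<and>
           mor_eq t1 t0 f (mor_add (mor_comp sX actA t0 g d) (mor_comp sX actA t1 d h))))"

text \<open>(m,n) \<in> K_0(proj \<Gamma>) \<cong> \<int>^2 is rigid iff it is the g-vector [T^0]-[T^{-1}] of a
  2-term presilting complex T.\<close>
definition rigid :: "('k::field \<Rightarrow> 'x::ab_group_add \<Rightarrow> 'x) \<Rightarrow> ('a::ring_1 \<Rightarrow> 'x \<Rightarrow> 'x)
    \<Rightarrow> 'x set \<Rightarrow> int \<times> int \<Rightarrow> bool" where
  "rigid sX actA M v \<longleftrightarrow> (\<exists>t0 t1 (d::('a,'x,'k) tmor). presilting sX actA M t0 t1 d \<and>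
      fst v = int (fst t0) - int (fst t1) \<and> snd v = int (snd t0) - int (snd t1))"

end

theory Submission
  imports Defs
begin


locale LR =
  fixes dummy :: "'a::ring_1 itself"
  assumes loc: "local_ring TYPE('a)"
begin

abbreviation J :: "'a set" where "J \<equiv> jacobson"

lemma ex_max: "\<exists>I::'a set. maximal_left_ideal I \<and> (\<forall>I'. maximal_left_ideal I' \<longrightarrow> I' = I)"
  using loc unfolding local_ring_def by (auto elim!: ex1E)

lemma J_eq: "maximal_left_ideal (I::'a set) \<Longrightarrow> J = I"
proof -
  assume m: "maximal_left_ideal I"
  then have "{I. maximal_left_ideal (I::'a set)} = {I}" using ex_max by blast
  then show ?thesis unfolding jacobson_def by simp
qed

lemma J_max: "maximal_left_ideal J"
proof -
  obtain I :: "'a set" where I: "maximal_left_ideal I" using ex_max by blast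
  then have "J = I" by (rule J_eq)
  then show ?thesis using I by simp
qed

lemma J_left: "left_ideal J" using J_max unfolding maximal_left_ideal_def by blast

lemma one_notin_J: "(1::'a) \<notin> J"
proof
  assume "1 \<in> J"
  then have "\<forall>r. r * 1 \<in> J" using J_left unfolding left_ideal_def by blast
  then have "J = UNIV" by auto
  with J_max show False unfolding maximal_left_ideal_def by blast
qed

lemma J_0: "0 \<in> J" using J_left unfolding left_ideal_def by blast
lemma J_add: "x \<in> J \<Longrightarrow> y \<in> J \<Longrightarrow> x + y \<in> J" using J_left unfolding left_ideal_def by blast
lemma J_neg: "x \<in> J \<Longrightarrow> - x \<in> J" using J_left unfolding left_ideal_def by blast
lemma J_lmult: "x \<in> J \<Longrightarrow> r * x \<in> J" using J_left unfolding left_ideal_def by blast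

lemma J_diff: "x \<in> J \<Longrightarrow> y \<in> J \<Longrightarrow> x - y \<in> J"
proof -
  assume "x \<in> J" "y \<in> J"
  then have "x + - y \<in> J" using J_add J_neg by blast
  then show ?thesis by (simp only: diff_conv_add_uminus)
qed

lemma proper_in_J:
  assumes L: "left_ideal (L::'a set)" and one: "1 \<notin> L"
  shows "L \<subseteq> J"
proof -
  let ?F = "{L'. left_ideal L' \<and> L \<subseteq> L' \<and> (1::'a) \<notin> L'}"
  have "\<exists>M\<in>?F. \<forall>X\<in>?F. M \<subseteq> X \<longrightarrow> X = M"
  proof (rule subset_Zorn_nonempty)
    show "?F \<noteq> {}" using L one by blast
  next
    fix C assume ne: "C \<noteq> {}" and ch: "subset.chain ?F C"
    have sub: "\<And>X. X \<in> C \<Longrightarrow> left_ideal X \<and> L \<subseteq> X \<and> 1 \<notin> X"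
      using ch unfolding subset.chain_def by blast
    have tot: "\<And>X Y. X \<in> C \<Longrightarrow> Y \<in> C \<Longrightarrow> X \<subseteq> Y \<or> Y \<subseteq> X"
      using ch unfolding subset.chain_def by blast
    have li: "\<And>X. X \<in> C \<Longrightarrow> 0 \<in> X \<and> (\<forall>x\<in>X. \<forall>y\<in>X. x + y \<in> X) \<and> (\<forall>x\<in>X. - x \<in> X)
     \<and> (\<forall>r. \<forall>x\<in>X. r * x \<in> X)" using sub unfolding left_ideal_def by metis
    have "left_ideal (\<Union>C)" unfolding left_ideal_def
    proof (intro conjI ballI allI)
      obtain X where "X \<in> C" using ne by blast
      then show "0 \<in> \<Union>C" using li by blast
    next
      fix x y assume "x \<in> \<Union>C" "y \<in> \<Union>C"
      then obtain X Y where X: "X \<in> C" "x \<in> X" and Y: "Y \<in> C" "y \<in> Y" by blast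
      show "x + y \<in> \<Union>C"
      proof (cases "X \<subseteq> Y")
        case True
        then have "x + y \<in> Y" using X Y li by blast
        then show ?thesis using Y by blast
      next
        case False
        then have "Y \<subseteq> X" using tot X Y by blast
        then have "x + y \<in> X" using X Y li by blast
        then show ?thesis using X by blast
      qed
    next
      fix x assume "x \<in> \<Union>C"
      then obtain X where X: "X \<in> C" "x \<in> X" by blast
      then have "- x \<in> X" using li by blast
      then show "- x \<in> \<Union>C" using X by blast
    next
      fix r x assume "x \<in> \<Union>C"
      then obtain X where X: "X \<in> C" "x \<in> X" by blast
      then have "r * x \<in> X" using li by blast
      then show "r * x \<in> \<Union>C" using X by blast
    qed
    moreover have "L \<subseteq> \<Union>C" using ne sub by blast
    moreover have "1 \<notin> \<Union>C" using sub by blast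
    ultimately show "\<Union>C \<in> ?F" by blast
  qed
  then obtain M where M: "M \<in> ?F" and Mmax: "\<forall>X\<in>?F. M \<subseteq> X \<longrightarrow> X = M" by blast
  have "maximal_left_ideal M" unfolding maximal_left_ideal_def
  proof (intro conjI allI impI)
    show "left_ideal M" using M by blast
    show "M \<noteq> UNIV" using M by blast
  next
    fix L' assume a: "left_ideal L' \<and> M \<subseteq> L'"
    show "L' = M \<or> L' = UNIV"
    proof (cases "(1::'a) \<in> L'")
      case True
      then have "\<forall>r. r * 1 \<in> L'" using a unfolding left_ideal_def by blast
      then show ?thesis by auto
    next
      case False
      then have "L' \<in> ?F" using a M by blast
      then show ?thesis using Mmax a by blast
    qed
  qed
  then have "J = M" by (rule J_eq)
  then show ?thesis using M by blast
qed

lemma notin_J_linv: assumes "x \<notin> J" shows "\<exists>u. u * x = 1"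
proof (rule ccontr)
  assume n: "\<not> (\<exists>u. u * x = 1)"
  let ?L = "{r * x | r. True}"
  have "left_ideal ?L" unfolding left_ideal_def
  proof (intro conjI ballI allI)
    show "0 \<in> ?L" by (metis (mono_tags) mult_zero_left mem_Collect_eq)
  next
    fix a b assume "a \<in> ?L" "b \<in> ?L"
    then obtain r s where "a = r * x" "b = s * x" by blast
    then have "a + b = (r + s) * x" by (simp add: distrib_right)
    then show "a + b \<in> ?L" by blast
  next
    fix a assume "a \<in> ?L"
    then obtain r where "a = r * x" by blast
    then have "- a = (- r) * x" by simp
    then show "- a \<in> ?L" by blast
  next
    fix q a assume "a \<in> ?L"
    then obtain r where "a = r * x" by blast
    then have "q * a = (q * r) * x" by (simp add: mult.assoc)
    then show "q * a \<in> ?L" by blast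
  qed
  moreover have "1 \<notin> ?L" using n by auto
  ultimately have "?L \<subseteq> J" by (rule proper_in_J)
  moreover have "x \<in> ?L" by (metis (mono_tags) mult_1_left mem_Collect_eq)
  ultimately show False using assms by blast
qed

lemma J_rmult: assumes j: "j \<in> J" shows "j * a \<in> J"
proof (rule ccontr)
  assume "j * a \<notin> J"
  then obtain u where u: "u * (j * a) = 1" using notin_J_linv by blast
  define b where "b = u * j"
  have ba: "b * a = 1" using u by (simp add: b_def mult.assoc)
  have bJ: "b \<in> J" using j J_lmult b_def by simp
  have "a * b \<in> J" using bJ J_lmult by simp
  then have "1 - a * b \<notin> J" using J_add[of "1 - a*b" "a*b"] one_notin_J by auto
  then obtain w where w: "w * (1 - a * b) = 1" using notin_J_linv by blast
  have "(1 - a * b) * a = 0" by (simp add: algebra_simps mult.assoc[symmetric] ba)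
  then have "w * ((1 - a * b) * a) = 0" by simp
  then have "a = 0" using w by (simp add: mult.assoc[symmetric])
  then show False using ba by simp
qed

lemma notin_J_unit: assumes "x \<notin> J" shows "\<exists>v. v * x = 1 \<and> x * v = 1"
proof -
  obtain u where u: "u * x = 1" using notin_J_linv assms by blast
  have "u \<notin> J" using J_rmult u one_notin_J by metis
  then obtain c where c: "c * u = 1" using notin_J_linv by blast
  have "c = c * (u * x)" using u by simp
  also have "... = x" using c by (simp add: mult.assoc[symmetric])
  finally have "c = x" .
  then show ?thesis using u c by blast
qed

end


definition idm :: "('a::ring_1,'x::ab_group_add,'k::field) tmor" where
  "idm = ((\<lambda>i j. if i = j then 1 else 0), (\<lambda>i j. 0), (\<lambda>i j. if i = j then 1 else 0))"
definition zm :: "('a::ring_1,'x::ab_group_add,'k::field) tmor" where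
  "zm = ((\<lambda>i j. 0), (\<lambda>i j. 0), (\<lambda>i j. 0))"
definition mneg :: "('a::ring_1,'x::ab_group_add,'k::field) tmor \<Rightarrow> ('a,'x,'k) tmor" where
  "mneg f = ((\<lambda>i j. - fst f i j), (\<lambda>i j. - fst (snd f) i j), (\<lambda>i j. - snd (snd f) i j))"

lemma mor_eq_refl: "mor_eq s t f f" unfolding mor_eq_def by simp
lemma mor_eq_sym: "mor_eq s t f g \<Longrightarrow> mor_eq s t g f" unfolding mor_eq_def by simp
lemma mor_eq_trans: "mor_eq s t f g \<Longrightarrow> mor_eq s t g h \<Longrightarrow> mor_eq s t f h"
  unfolding mor_eq_def by simp
lemma mor_eq_add: "mor_eq s t f f' \<Longrightarrow> mor_eq s t g g' \<Longrightarrow> mor_eq s t (mor_add f g) (mor_add f' g')"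
  unfolding mor_eq_def mor_add_def by simp
lemma mor_eq_neg: "mor_eq s t f f' \<Longrightarrow> mor_eq s t (mneg f) (mneg f')"
  unfolding mor_eq_def mneg_def by simp

locale setting =
  fixes sA :: "'k::field \<Rightarrow> 'a::ring_1 \<Rightarrow> 'a"
    and sX :: "'k \<Rightarrow> 'x::ab_group_add \<Rightarrow> 'x"
    and actA :: "'a \<Rightarrow> 'x \<Rightarrow> 'x"
  assumes alg: "k_algebra sA" and loc2: "local_ring TYPE('a)"
    and res: "residue_field_is_k sA" and bim: "bimodule sA sX actA"
begin

sublocale LR "TYPE('a)" using loc2 by unfold_locales

abbreviation \<iota> :: "'k \<Rightarrow> 'a" where "\<iota> c \<equiv> sA c 1"

lemma vsA: "vector_space sA" using alg unfolding k_algebra_def by blast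

lemma sA_mult_left: "sA c (a * b) = sA c a * b" and sA_mult_right: "sA c (a * b) = a * sA c b"
  using alg unfolding k_algebra_def by blast+

lemma sA_ab: "sA c (a + b) = sA c a + sA c b" and sA_cd: "sA (c + d) a = sA c a + sA d a"
  and sA_ss: "sA c (sA d a) = sA (c * d) a" and sA_one: "sA 1 a = a"
  using vsA unfolding vector_space_def by blast+

lemma sA_iota: "sA c a = \<iota> c * a"
  using sA_mult_left[of c 1 a] by simp

lemma iota_comm: "\<iota> c * a = a * \<iota> c"
  using sA_mult_left[of c 1 a] sA_mult_right[of c a 1] by simp

lemma iota_add: "\<iota> (c + d) = \<iota> c + \<iota> d" using sA_cd by blast
lemma iota_one: "\<iota> 1 = 1" using sA_one by blast
lemma iota_mult: "\<iota> (c * d) = \<iota> c * \<iota> d"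
  using sA_ss[of c d 1] sA_iota[of c "\<iota> d"] by simp
lemma iota_zero: "\<iota> 0 = 0"
  using iota_add[of 0 0] by simp
lemma iota_neg: "\<iota> (- c) = - \<iota> c"
  using iota_add[of c "- c"] iota_zero by (simp add: add.inverse_unique)
lemma iota_diff: "\<iota> (c - d) = \<iota> c - \<iota> d"
  using iota_add[of c "- d"] iota_neg[of d] by simp
lemma iota_sum: "\<iota> (\<Sum>l\<in>S. f l) = (\<Sum>l\<in>S. \<iota> (f l))"
  by (induction S rule: infinite_finite_induct) (simp_all add: iota_zero iota_add)

lemma act_addl: "actA (a + b) x = actA a x + actA b x"
  and act_addr: "actA a (x + y) = actA a x + actA a y"
  and act_mult: "actA (a * b) x = actA a (actA b x)"
  and act_one: "actA 1 x = x"
  and sX_eq: "sX c x = actA (\<iota> c) x"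
  using bim unfolding bimodule_def by simp_all

lemma act_zerol[simp]: "actA 0 x = 0"
  using act_addl[of 0 0 x] by simp
lemma act_zeror[simp]: "actA a 0 = 0"
  using act_addr[of a 0 0] by simp
lemma act_negl: "actA (- a) x = - actA a x"
  using act_addl[of a "- a" x] by (simp add: add.inverse_unique)
lemma act_negr: "actA a (- x) = - actA a x"
  using act_addr[of a x "- x"] by (simp add: add.inverse_unique)
lemma act_diffl: "actA (a - b) x = actA a x - actA b x"
  using act_addl[of a "- b" x] act_negl[of b x] by simp
lemma act_diffr: "actA a (x - y) = actA a x - actA a y"
  using act_addr[of a x "- y"] act_negr[of a y] by simp
lemma act_suml: "actA (\<Sum>l\<in>S. f l) x = (\<Sum>l\<in>S. actA (f l) x)"
  by (induction S rule: infinite_finite_induct) (simp_all add: act_addl)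
lemma act_sumr: "actA a (\<Sum>l\<in>S. f l) = (\<Sum>l\<in>S. actA a (f l))"
  by (induction S rule: infinite_finite_induct) (simp_all add: act_addr)
lemma act_iota_comm: "actA (\<iota> c) (actA a x) = actA a (actA (\<iota> c) x)"
  by (simp add: act_mult[symmetric] iota_comm)
lemma act_iota_iota: "actA (\<iota> c) (actA (\<iota> d) x) = actA (\<iota> (d * c)) x"
  by (simp add: act_mult[symmetric] iota_mult[symmetric] mult.commute)

abbreviation cmp where "cmp \<equiv> mor_comp sX actA"

lemma cmp_A: "fst (cmp m f g) = (\<lambda>i j. \<Sum>l<fst m. fst f i l * fst g l j)"
  unfolding mor_comp_def by simp
lemma cmp_X: "fst (snd (cmp m f g)) = (\<lambda>i j. (\<Sum>l<fst m. actA (fst f i l) (fst (snd g) l j))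
           + (\<Sum>l<snd m. actA (\<iota> (snd (snd g) l j)) (fst (snd f) i l)))"
  unfolding mor_comp_def by (simp add: sX_eq)
lemma cmp_k: "snd (snd (cmp m f g)) = (\<lambda>i j. \<Sum>l<snd m. snd (snd f) i l * snd (snd g) l j)"
  unfolding mor_comp_def by simp

lemma cmp_assoc: "cmp m1 (cmp m2 f g) h = cmp m2 f (cmp m1 g h)"
proof -
  obtain fA fX fk where f: "f = (fA, fX, fk)" by (cases f) auto
  obtain gA gX gk where g: "g = (gA, gX, gk)" by (cases g) auto
  obtain hA hX hk where h: "h = (hA, hX, hk)" by (cases h) auto
  have A: "(\<Sum>l<fst m1. (\<Sum>p<fst m2. fA i p * gA p l) * hA l j) =
           (\<Sum>p<fst m2. fA i p * (\<Sum>l<fst m1. gA p l * hA l j))" for i j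
    by (simp add: sum_distrib_left sum_distrib_right mult.assoc) (rule sum.swap)
  have K: "(\<Sum>l<snd m1. (\<Sum>p<snd m2. fk i p * gk p l) * hk l j) =
           (\<Sum>p<snd m2. fk i p * (\<Sum>l<snd m1. gk p l * hk l j))" for i j
    by (simp add: sum_distrib_left sum_distrib_right mult.assoc) (rule sum.swap)
  have X1: "(\<Sum>l<fst m1. actA (\<Sum>p<fst m2. fA i p * gA p l) (hX l j)) =
            (\<Sum>p<fst m2. actA (fA i p) (\<Sum>l<fst m1. actA (gA p l) (hX l j)))" for i j
    by (simp add: act_suml act_sumr act_mult) (rule sum.swap)
  have X2: "(\<Sum>l<snd m1. actA (\<iota> (hk l j)) (\<Sum>p<fst m2. actA (fA i p) (gX p l))) =
            (\<Sum>p<fst m2. actA (fA i p) (\<Sum>l<snd m1. actA (\<iota> (hk l j)) (gX p l)))" for i j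
    by (simp add: act_suml act_sumr act_iota_comm) (rule sum.swap)
  have X3: "(\<Sum>l<snd m1. actA (\<iota> (hk l j)) (\<Sum>p<snd m2. actA (\<iota> (gk p l)) (fX i p))) =
            (\<Sum>p<snd m2. actA (\<iota> (\<Sum>l<snd m1. gk p l * hk l j)) (fX i p))" for i j
    by (simp add: act_suml act_sumr act_iota_iota iota_sum) (rule sum.swap)
  have eA: "fst (cmp m1 (cmp m2 f g) h) = fst (cmp m2 f (cmp m1 g h))"
    unfolding cmp_A f g h using A by simp
  have ek: "snd (snd (cmp m1 (cmp m2 f g) h)) = snd (snd (cmp m2 f (cmp m1 g h)))"
    unfolding cmp_k f g h using K by simp
  have eX: "fst (snd (cmp m1 (cmp m2 f g) h)) = fst (snd (cmp m2 f (cmp m1 g h)))"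
    unfolding cmp_X cmp_A cmp_k f g h fst_conv snd_conv
    by (simp only: act_addr sum.distrib X1 X2 X3 add.assoc)
  show ?thesis using eA ek eX by (simp add: prod_eq_iff)
qed

lemma cmp_addr: "cmp m f (mor_add g1 g2) = mor_add (cmp m f g1) (cmp m f g2)"
  unfolding mor_comp_def mor_add_def
  by (simp add: sX_eq act_addr iota_add act_addl distrib_left distrib_right sum.distrib algebra_simps)

lemma cmp_addl: "cmp m (mor_add f1 f2) g = mor_add (cmp m f1 g) (cmp m f2 g)"
  unfolding mor_comp_def mor_add_def
  by (simp add: sX_eq act_addr iota_add act_addl distrib_left distrib_right sum.distrib algebra_simps)

lemma cmp_negr: "cmp m f (mneg g) = mneg (cmp m f g)"
  unfolding mor_comp_def mneg_def
  by (simp add: sX_eq act_negr act_negl iota_neg sum_negf)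

lemma cmp_negl: "cmp m (mneg f) g = mneg (cmp m f g)"
  unfolding mor_comp_def mneg_def
  by (simp add: sX_eq act_negr act_negl iota_neg sum_negf)

lemma sum_delta_nat: "(\<Sum>l<(n::nat). if i = l then F l else (0::'b::comm_monoid_add)) = (if i < n then F i else 0)"
  by (induct n) auto
lemma sum_delta_nat': "(\<Sum>l<(n::nat). if l = j then F l else (0::'b::comm_monoid_add)) = (if j < n then F j else 0)"
  by (induct n) auto

lemma mult_delta_l: "(if P then 1 else 0) * (x::'b::ring_1) = (if P then x else 0)" by simp
lemma mult_delta_r: "(x::'b::ring_1) * (if P then 1 else 0) = (if P then x else 0)" by simp
lemma act_delta: "actA (if P then 1 else 0) x = (if P then x else 0)" by (simp add: act_one)
lemma iota_delta: "\<iota> (if P then 1 else 0) = (if P then 1 else 0)" by (simp add: iota_one iota_zero)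

lemma cmp_idl: "mor_eq src m (cmp m idm g) g"
  unfolding mor_eq_def cmp_A cmp_X cmp_k idm_def fst_conv snd_conv
  by (simp add: mult_delta_l act_delta iota_zero sum_delta_nat)

lemma cmp_idr: "mor_eq src tgt (cmp src g idm) g"
  unfolding mor_eq_def cmp_A cmp_X cmp_k idm_def fst_conv snd_conv
  by (simp add: mult_delta_r iota_delta act_delta act_one sum_delta_nat')

lemma cmp_cong: "mor_eq m tgt f f' \<Longrightarrow> mor_eq src m g g' \<Longrightarrow> mor_eq src tgt (cmp m f g) (cmp m f' g')"
  unfolding mor_eq_def cmp_A cmp_X cmp_k
  by (auto intro!: sum.cong arg_cong2[where f="(+)"])

lemma pres_UNIV: "presilting sX actA UNIV t0 t1 d \<longleftrightarrow>
   (\<forall>f. \<exists>g h. mor_eq t1 t0 f (mor_add (cmp t0 g d) (cmp t1 d h)))"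
  by (simp add: presilting_def is_mor_def)

lemma pres_cong:
  assumes "mor_eq t1 t0 d d'" and "presilting sX actA UNIV t0 t1 d"
  shows "presilting sX actA UNIV t0 t1 d'"
  unfolding pres_UNIV
proof
  fix f
  obtain g h where gh: "mor_eq t1 t0 f (mor_add (cmp t0 g d) (cmp t1 d h))"
    using assms(2) unfolding pres_UNIV by blast
  have "mor_eq t1 t0 (mor_add (cmp t0 g d) (cmp t1 d h)) (mor_add (cmp t0 g d') (cmp t1 d' h))"
    by (intro mor_eq_add cmp_cong mor_eq_refl assms(1))
  then show "\<exists>g h. mor_eq t1 t0 f (mor_add (cmp t0 g d') (cmp t1 d' h))"
    using gh mor_eq_trans by blast
qed

lemma pres_left:
  assumes P: "presilting sX actA UNIV t0 t1 d"
    and LL': "mor_eq t0 t0 (cmp t0 L L') idm" and L'L: "mor_eq t0 t0 (cmp t0 L' L) idm"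
  shows "presilting sX actA UNIV t0 t1 (cmp t0 L d)"
  unfolding pres_UNIV
proof
  fix f
  obtain g h where gh: "mor_eq t1 t0 (cmp t0 L' f) (mor_add (cmp t0 g d) (cmp t1 d h))"
    using P unfolding pres_UNIV by blast
  have e1: "mor_eq t1 t0 f (cmp t0 idm f)" by (rule mor_eq_sym, rule cmp_idl)
  have e2: "mor_eq t1 t0 (cmp t0 idm f) (cmp t0 (cmp t0 L L') f)"
    by (intro cmp_cong mor_eq_refl mor_eq_sym[OF LL'])
  have e3: "cmp t0 (cmp t0 L L') f = cmp t0 L (cmp t0 L' f)" by (rule cmp_assoc)
  have e4: "mor_eq t1 t0 (cmp t0 L (cmp t0 L' f)) (cmp t0 L (mor_add (cmp t0 g d) (cmp t1 d h)))"
    by (intro cmp_cong mor_eq_refl gh)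
  have e5: "cmp t0 L (mor_add (cmp t0 g d) (cmp t1 d h)) =
            mor_add (cmp t0 L (cmp t0 g d)) (cmp t0 L (cmp t1 d h))" by (rule cmp_addr)
  have e6: "cmp t0 L (cmp t1 d h) = cmp t1 (cmp t0 L d) h" by (rule cmp_assoc[symmetric])
  have e7: "cmp t0 (cmp t0 (cmp t0 L g) L') (cmp t0 L d) = cmp t0 (cmp t0 L g) (cmp t0 (cmp t0 L' L) d)"
    by (simp add: cmp_assoc)
  have e8: "mor_eq t1 t0 (cmp t0 (cmp t0 L g) (cmp t0 (cmp t0 L' L) d)) (cmp t0 (cmp t0 L g) (cmp t0 idm d))"
    by (intro cmp_cong mor_eq_refl L'L)
  have e9: "mor_eq t1 t0 (cmp t0 (cmp t0 L g) (cmp t0 idm d)) (cmp t0 (cmp t0 L g) d)"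
    by (intro cmp_cong mor_eq_refl cmp_idl)
  have e10: "cmp t0 (cmp t0 L g) d = cmp t0 L (cmp t0 g d)" by (rule cmp_assoc)
  have A: "mor_eq t1 t0 (cmp t0 L (cmp t0 g d)) (cmp t0 (cmp t0 (cmp t0 L g) L') (cmp t0 L d))"
    using e7 e8 e9 e10 by (metis mor_eq_sym mor_eq_trans)
  have "mor_eq t1 t0 f (mor_add (cmp t0 (cmp t0 (cmp t0 L g) L') (cmp t0 L d)) (cmp t1 (cmp t0 L d) h))"
  proof -
    have "mor_eq t1 t0 f (mor_add (cmp t0 L (cmp t0 g d)) (cmp t0 L (cmp t1 d h)))"
      using e1 e2 e3 e4 e5 by (metis mor_eq_trans)
    moreover have "mor_eq t1 t0 (mor_add (cmp t0 L (cmp t0 g d)) (cmp t0 L (cmp t1 d h)))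
      (mor_add (cmp t0 (cmp t0 (cmp t0 L g) L') (cmp t0 L d)) (cmp t1 (cmp t0 L d) h))"
      unfolding e6 by (intro mor_eq_add A mor_eq_refl)
    ultimately show ?thesis by (rule mor_eq_trans)
  qed
  then show "\<exists>g h. mor_eq t1 t0 f (mor_add (cmp t0 g (cmp t0 L d)) (cmp t1 (cmp t0 L d) h))" by blast
qed

lemma pres_right:
  assumes P: "presilting sX actA UNIV t0 t1 d"
    and RR': "mor_eq t1 t1 (cmp t1 R R') idm" and R'R: "mor_eq t1 t1 (cmp t1 R' R) idm"
  shows "presilting sX actA UNIV t0 t1 (cmp t1 d R)"
  unfolding pres_UNIV
proof
  fix f
  obtain g h where gh: "mor_eq t1 t0 (cmp t1 f R') (mor_add (cmp t0 g d) (cmp t1 d h))"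
    using P unfolding pres_UNIV by blast
  have e1: "mor_eq t1 t0 f (cmp t1 f idm)" by (rule mor_eq_sym, rule cmp_idr)
  have e2: "mor_eq t1 t0 (cmp t1 f idm) (cmp t1 f (cmp t1 R' R))"
    by (intro cmp_cong mor_eq_refl mor_eq_sym[OF R'R])
  have e3: "cmp t1 f (cmp t1 R' R) = cmp t1 (cmp t1 f R') R" by (rule cmp_assoc[symmetric])
  have e4: "mor_eq t1 t0 (cmp t1 (cmp t1 f R') R) (cmp t1 (mor_add (cmp t0 g d) (cmp t1 d h)) R)"
    by (intro cmp_cong mor_eq_refl gh)
  have e5: "cmp t1 (mor_add (cmp t0 g d) (cmp t1 d h)) R =
            mor_add (cmp t1 (cmp t0 g d) R) (cmp t1 (cmp t1 d h) R)" by (rule cmp_addl)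
  have e6: "cmp t1 (cmp t0 g d) R = cmp t0 g (cmp t1 d R)" by (rule cmp_assoc)
  have e7: "cmp t1 (cmp t1 d h) R = cmp t1 d (cmp t1 h R)" by (rule cmp_assoc)
  have e8: "mor_eq t1 t0 (cmp t1 d (cmp t1 h R)) (cmp t1 (cmp t1 d idm) (cmp t1 h R))"
    by (intro cmp_cong mor_eq_refl mor_eq_sym[OF cmp_idr])
  have e9: "mor_eq t1 t0 (cmp t1 (cmp t1 d idm) (cmp t1 h R)) (cmp t1 (cmp t1 d (cmp t1 R R')) (cmp t1 h R))"
    by (intro cmp_cong mor_eq_refl mor_eq_sym[OF RR'])
  have e10: "cmp t1 (cmp t1 d (cmp t1 R R')) (cmp t1 h R) = cmp t1 (cmp t1 d R) (cmp t1 R' (cmp t1 h R))"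
    by (simp add: cmp_assoc)
  have A: "mor_eq t1 t0 (cmp t1 (cmp t1 d h) R) (cmp t1 (cmp t1 d R) (cmp t1 R' (cmp t1 h R)))"
    using e7 e8 e9 e10 by (metis mor_eq_trans)
  have "mor_eq t1 t0 f (mor_add (cmp t0 g (cmp t1 d R)) (cmp t1 (cmp t1 d R) (cmp t1 R' (cmp t1 h R))))"
  proof -
    have "mor_eq t1 t0 f (mor_add (cmp t1 (cmp t0 g d) R) (cmp t1 (cmp t1 d h) R))"
      using e1 e2 e3 e4 e5 by (metis mor_eq_trans)
    moreover have "mor_eq t1 t0 (mor_add (cmp t1 (cmp t0 g d) R) (cmp t1 (cmp t1 d h) R))
      (mor_add (cmp t0 g (cmp t1 d R)) (cmp t1 (cmp t1 d R) (cmp t1 R' (cmp t1 h R))))"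
      unfolding e6 by (intro mor_eq_add A mor_eq_refl)
    ultimately show ?thesis by (rule mor_eq_trans)
  qed
  then show "\<exists>g h. mor_eq t1 t0 f (mor_add (cmp t0 g (cmp t1 d R)) (cmp t1 (cmp t1 d R) h))" by blast
qed

lemma nil_inv:
  assumes NN: "mor_eq t t (cmp t N N) zm"
  shows "mor_eq t t (cmp t (mor_add idm N) (mor_add idm (mneg N))) idm"
    and "mor_eq t t (cmp t (mor_add idm (mneg N)) (mor_add idm N)) idm"
proof -
  have NN': "mor_eq t t (cmp t N (mneg N)) (mneg zm)" "mor_eq t t (cmp t (mneg N) N) (mneg zm)"
    using NN by (simp_all add: cmp_negr cmp_negl mor_eq_neg)
  have "mor_eq t t (cmp t (mor_add idm N) (mor_add idm (mneg N)))
     (mor_add (mor_add idm N) (mor_add (mneg N) (mneg zm)))"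
    unfolding cmp_addl cmp_addr
    by (intro mor_eq_add cmp_idl cmp_idr NN')
  moreover have "mor_eq t t (mor_add (mor_add idm N) (mor_add (mneg N) (mneg zm))) idm"
    unfolding mor_eq_def mor_add_def mneg_def zm_def by simp
  ultimately show "mor_eq t t (cmp t (mor_add idm N) (mor_add idm (mneg N))) idm"
    by (rule mor_eq_trans)
  have "mor_eq t t (cmp t (mor_add idm (mneg N)) (mor_add idm N))
     (mor_add (mor_add idm (mneg N)) (mor_add N (mneg zm)))"
    unfolding cmp_addl cmp_addr
    by (intro mor_eq_add cmp_idl cmp_idr NN')
  moreover have "mor_eq t t (mor_add (mor_add idm (mneg N)) (mor_add N (mneg zm))) idm"
    unfolding mor_eq_def mor_add_def mneg_def zm_def by simp
  ultimately show "mor_eq t t (cmp t (mor_add idm (mneg N)) (mor_add idm N)) idm"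
    by (rule mor_eq_trans)
qed

end


definition skip :: "nat \<Rightarrow> nat \<Rightarrow> nat" where "skip p i = (if i < p then i else Suc i)"
definition unskip :: "nat \<Rightarrow> nat \<Rightarrow> nat" where "unskip p i = (if i < p then i else i - 1)"

lemma unskip_skip[simp]: "unskip p (skip p i) = i" unfolding skip_def unskip_def by auto
lemma skip_neq[simp]: "skip p i \<noteq> p" unfolding skip_def by auto
lemma skip_less: "p < n \<Longrightarrow> i < n - 1 \<Longrightarrow> skip p i < n" unfolding skip_def by auto

lemma sum_skip:
  assumes "p < (n::nat)"
  shows "(\<Sum>l<n. F l) = F p + (\<Sum>l<n - 1. F (skip p l))"
proof -
  have bij: "bij_betw (skip p) {..<n - 1} ({..<n} - {p})"
  proof (rule bij_betw_imageI)
    show "inj_on (skip p) {..<n - 1}"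
      by (rule inj_onI) (metis unskip_skip)
    show "skip p ` {..<n - 1} = {..<n} - {p}"
    proof
      show "skip p ` {..<n - 1} \<subseteq> {..<n} - {p}" using assms skip_less by auto
    next
      show "{..<n} - {p} \<subseteq> skip p ` {..<n - 1}"
      proof
        fix l assume l: "l \<in> {..<n} - {p}"
        then have "l = skip p (unskip p l)" unfolding skip_def unskip_def by auto
        moreover have "unskip p l < n - 1" using l assms unfolding unskip_def by auto
        ultimately show "l \<in> skip p ` {..<n - 1}" by blast
      qed
    qed
  qed
  have "(\<Sum>l<n. F l) = F p + (\<Sum>l\<in>{..<n} - {p}. F l)"
    using assms by (simp add: sum.remove)
  also have "(\<Sum>l\<in>{..<n} - {p}. F l) = (\<Sum>l<n - 1. F (skip p l))"
    using sum.reindex_bij_betw[OF bij, of F] by simp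
  finally show ?thesis .
qed

context setting begin

lemma del_A:
  assumes P: "presilting sX actA UNIV (a0, b0) (a1, b1) d"
    and i0: "i0 < a0" and j0: "j0 < a1"
    and r1: "\<forall>j<a1. j \<noteq> j0 \<longrightarrow> fst d i0 j = 0"
    and r2: "\<forall>j<b1. fst (snd d) i0 j = 0"
    and c1: "\<forall>i<a0. i \<noteq> i0 \<longrightarrow> fst d i j0 = 0"
  shows "presilting sX actA UNIV (a0 - 1, b0) (a1 - 1, b1)
     ((\<lambda>i j. fst d (skip i0 i) (skip j0 j)), (\<lambda>i j. fst (snd d) (skip i0 i) j), snd (snd d))"
  unfolding pres_UNIV
proof
  fix f' :: "('a,'x,'k) tmor"
  let ?d' = "((\<lambda>i j. fst d (skip i0 i) (skip j0 j)), (\<lambda>i j. fst (snd d) (skip i0 i) j), snd (snd d))"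
  let ?f = "((\<lambda>i j. fst f' (unskip i0 i) (unskip j0 j)), (\<lambda>i j. fst (snd f') (unskip i0 i) j), snd (snd f'))"
  obtain g h where gh: "mor_eq (a1, b1) (a0, b0) ?f (mor_add (cmp (a0, b0) g d) (cmp (a1, b1) d h))"
    using P unfolding pres_UNIV by blast
  have gA: "\<forall>i<a0. \<forall>j<a1. fst ?f i j = fst (mor_add (cmp (a0, b0) g d) (cmp (a1, b1) d h)) i j"
    and gX: "\<forall>i<a0. \<forall>j<b1. fst (snd ?f) i j = fst (snd (mor_add (cmp (a0, b0) g d) (cmp (a1, b1) d h))) i j"
    and gk: "\<forall>i<b0. \<forall>j<b1. snd (snd ?f) i j = snd (snd (mor_add (cmp (a0, b0) g d) (cmp (a1, b1) d h))) i j"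
    using gh unfolding mor_eq_def by simp_all
  define g' where "g' = ((\<lambda>i l. fst g (skip i0 i) (skip i0 l)), (\<lambda>i l. fst (snd g) (skip i0 i) l), snd (snd g))"
  define h' where "h' = ((\<lambda>i l. fst h (skip j0 i) (skip j0 l)), (\<lambda>i l. fst (snd h) (skip j0 i) l), snd (snd h))"
  have "mor_eq (a1 - 1, b1) (a0 - 1, b0) f' (mor_add (cmp (a0 - 1, b0) g' ?d') (cmp (a1 - 1, b1) ?d' h'))"
    unfolding mor_eq_def
  proof (intro conjI allI impI)
    fix i j assume i: "i < fst (a0 - 1, b0)" and j: "j < fst (a1 - 1, b1)"
    have si: "skip i0 i < a0" using i i0 skip_less by simp
    have sj: "skip j0 j < a1" using j j0 skip_less by simp
    have e: "fst ?f (skip i0 i) (skip j0 j) = (\<Sum>l<a0. fst g (skip i0 i) l * fst d l (skip j0 j))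
        + (\<Sum>l<a1. fst d (skip i0 i) l * fst h l (skip j0 j))"
      using gA[rule_format, OF si sj] unfolding mor_add_def cmp_A by simp
    have z1: "fst d i0 (skip j0 j) = 0" using r1 sj by simp
    have z2: "fst d (skip i0 i) j0 = 0" using c1 si by simp
    show "fst f' i j = fst (mor_add (cmp (a0 - 1, b0) g' ?d') (cmp (a1 - 1, b1) ?d' h')) i j"
      using e unfolding mor_add_def cmp_A g'_def h'_def
      by (simp add: sum_skip[OF i0, where F="\<lambda>l. fst g (skip i0 i) l * fst d l (skip j0 j)"]
          sum_skip[OF j0, where F="\<lambda>l. fst d (skip i0 i) l * fst h l (skip j0 j)"] z1 z2)
  next
    fix i j assume i: "i < fst (a0 - 1, b0)" and j: "j < snd (a1 - 1, b1)"
    have si: "skip i0 i < a0" using i i0 skip_less by simp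
    have e: "fst (snd ?f) (skip i0 i) j = ((\<Sum>l<a0. actA (fst g (skip i0 i) l) (fst (snd d) l j))
        + (\<Sum>l<b0. actA (\<iota> (snd (snd d) l j)) (fst (snd g) (skip i0 i) l)))
        + ((\<Sum>l<a1. actA (fst d (skip i0 i) l) (fst (snd h) l j))
        + (\<Sum>l<b1. actA (\<iota> (snd (snd h) l j)) (fst (snd d) (skip i0 i) l)))"
      using gX[rule_format, OF si] j unfolding mor_add_def cmp_X by simp
    have z1: "fst (snd d) i0 j = 0" using r2 j by simp
    have z2: "fst d (skip i0 i) j0 = 0" using c1 si by simp
    show "fst (snd f') i j = fst (snd (mor_add (cmp (a0 - 1, b0) g' ?d') (cmp (a1 - 1, b1) ?d' h'))) i j"
      using e unfolding mor_add_def cmp_X g'_def h'_def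
      by (simp add: sum_skip[OF i0, where F="\<lambda>l. actA (fst g (skip i0 i) l) (fst (snd d) l j)"]
          sum_skip[OF j0, where F="\<lambda>l. actA (fst d (skip i0 i) l) (fst (snd h) l j)"] z1 z2)
  next
    fix i j assume i: "i < snd (a0 - 1, b0)" and j: "j < snd (a1 - 1, b1)"
    have e: "snd (snd ?f) i j = (\<Sum>l<b0. snd (snd g) i l * snd (snd d) l j)
        + (\<Sum>l<b1. snd (snd d) i l * snd (snd h) l j)"
      using gk i j unfolding mor_add_def cmp_k by simp
    show "snd (snd f') i j = snd (snd (mor_add (cmp (a0 - 1, b0) g' ?d') (cmp (a1 - 1, b1) ?d' h'))) i j"
      using e unfolding mor_add_def cmp_k g'_def h'_def by simp
  qed
  then show "\<exists>g h. mor_eq (a1 - 1, b1) (a0 - 1, b0) f' (mor_add (cmp (a0 - 1, b0) g ?d') (cmp (a1 - 1, b1) ?d' h))"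
    by blast
qed

lemma del_k:
  assumes P: "presilting sX actA UNIV (a0, b0) (a1, b1) d"
    and i0: "i0 < b0" and j0: "j0 < b1"
    and r1: "\<forall>j<b1. j \<noteq> j0 \<longrightarrow> snd (snd d) i0 j = 0"
    and c2: "\<forall>i<a0. fst (snd d) i j0 = 0"
    and c1: "\<forall>i<b0. i \<noteq> i0 \<longrightarrow> snd (snd d) i j0 = 0"
  shows "presilting sX actA UNIV (a0, b0 - 1) (a1, b1 - 1)
     (fst d, (\<lambda>i j. fst (snd d) i (skip j0 j)), (\<lambda>i j. snd (snd d) (skip i0 i) (skip j0 j)))"
  unfolding pres_UNIV
proof
  fix f' :: "('a,'x,'k) tmor"
  let ?d' = "(fst d, (\<lambda>i j. fst (snd d) i (skip j0 j)), (\<lambda>i j. snd (snd d) (skip i0 i) (skip j0 j)))"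
  let ?f = "(fst f', (\<lambda>i j. fst (snd f') i (unskip j0 j)), (\<lambda>i j. snd (snd f') (unskip i0 i) (unskip j0 j)))"
  obtain g h where gh: "mor_eq (a1, b1) (a0, b0) ?f (mor_add (cmp (a0, b0) g d) (cmp (a1, b1) d h))"
    using P unfolding pres_UNIV by blast
  have gA: "\<forall>i<a0. \<forall>j<a1. fst ?f i j = fst (mor_add (cmp (a0, b0) g d) (cmp (a1, b1) d h)) i j"
    and gX: "\<forall>i<a0. \<forall>j<b1. fst (snd ?f) i j = fst (snd (mor_add (cmp (a0, b0) g d) (cmp (a1, b1) d h))) i j"
    and gk: "\<forall>i<b0. \<forall>j<b1. snd (snd ?f) i j = snd (snd (mor_add (cmp (a0, b0) g d) (cmp (a1, b1) d h))) i j"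
    using gh unfolding mor_eq_def by simp_all
  define g' where "g' = (fst g, (\<lambda>i l. fst (snd g) i (skip i0 l)), (\<lambda>i l. snd (snd g) (skip i0 i) (skip i0 l)))"
  define h' where "h' = (fst h, (\<lambda>i l. fst (snd h) i (skip j0 l)), (\<lambda>i l. snd (snd h) (skip j0 i) (skip j0 l)))"
  have "mor_eq (a1, b1 - 1) (a0, b0 - 1) f' (mor_add (cmp (a0, b0 - 1) g' ?d') (cmp (a1, b1 - 1) ?d' h'))"
    unfolding mor_eq_def
  proof (intro conjI allI impI)
    fix i j assume i: "i < fst (a0, b0 - 1)" and j: "j < fst (a1, b1 - 1)"
    have e: "fst ?f i j = (\<Sum>l<a0. fst g i l * fst d l j)
        + (\<Sum>l<a1. fst d i l * fst h l j)"
      using gA i j unfolding mor_add_def cmp_A by simp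
    show "fst f' i j = fst (mor_add (cmp (a0, b0 - 1) g' ?d') (cmp (a1, b1 - 1) ?d' h')) i j"
      using e unfolding mor_add_def cmp_A g'_def h'_def by simp
  next
    fix i j assume i: "i < fst (a0, b0 - 1)" and j: "j < snd (a1, b1 - 1)"
    have sj: "skip j0 j < b1" using j j0 skip_less by simp
    have e: "fst (snd ?f) i (skip j0 j) = ((\<Sum>l<a0. actA (fst g i l) (fst (snd d) l (skip j0 j)))
        + (\<Sum>l<b0. actA (\<iota> (snd (snd d) l (skip j0 j))) (fst (snd g) i l)))
        + ((\<Sum>l<a1. actA (fst d i l) (fst (snd h) l (skip j0 j)))
        + (\<Sum>l<b1. actA (\<iota> (snd (snd h) l (skip j0 j))) (fst (snd d) i l)))"
      using gX[rule_format, OF _ sj] i unfolding mor_add_def cmp_X by simp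
    have z1: "snd (snd d) i0 (skip j0 j) = 0" using r1 sj by simp
    have z2: "fst (snd d) i j0 = 0" using c2 i by simp
    show "fst (snd f') i j = fst (snd (mor_add (cmp (a0, b0 - 1) g' ?d') (cmp (a1, b1 - 1) ?d' h'))) i j"
      using e unfolding mor_add_def cmp_X g'_def h'_def
      by (simp add: sum_skip[OF i0, where F="\<lambda>l. actA (\<iota> (snd (snd d) l (skip j0 j))) (fst (snd g) i l)"]
          sum_skip[OF j0, where F="\<lambda>l. actA (\<iota> (snd (snd h) l (skip j0 j))) (fst (snd d) i l)"] z1 z2 iota_zero)
  next
    fix i j assume i: "i < snd (a0, b0 - 1)" and j: "j < snd (a1, b1 - 1)"
    have si: "skip i0 i < b0" using i i0 skip_less by simp
    have sj: "skip j0 j < b1" using j j0 skip_less by simp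
    have e: "snd (snd ?f) (skip i0 i) (skip j0 j) = (\<Sum>l<b0. snd (snd g) (skip i0 i) l * snd (snd d) l (skip j0 j))
        + (\<Sum>l<b1. snd (snd d) (skip i0 i) l * snd (snd h) l (skip j0 j))"
      using gk[rule_format, OF si sj] unfolding mor_add_def cmp_k by simp
    have z1: "snd (snd d) i0 (skip j0 j) = 0" using r1 sj by simp
    have z2: "snd (snd d) (skip i0 i) j0 = 0" using c1 si by simp
    show "snd (snd f') i j = snd (snd (mor_add (cmp (a0, b0 - 1) g' ?d') (cmp (a1, b1 - 1) ?d' h'))) i j"
      using e unfolding mor_add_def cmp_k g'_def h'_def
      by (simp add: sum_skip[OF i0, where F="\<lambda>l. snd (snd g) (skip i0 i) l * snd (snd d) l (skip j0 j)"]
          sum_skip[OF j0, where F="\<lambda>l. snd (snd d) (skip i0 i) l * snd (snd h) l (skip j0 j)"] z1 z2)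
  qed
  then show "\<exists>g h. mor_eq (a1, b1 - 1) (a0, b0 - 1) f' (mor_add (cmp (a0, b0 - 1) g ?d') (cmp (a1, b1 - 1) ?d' h))"
    by blast
qed

end


context setting begin

lemma if_mult_l: "(if P then x else 0) * (y::'b::ring_1) = (if P then x * y else 0)" by simp
lemma if_mult_r: "(y::'b::ring_1) * (if P then x else 0) = (if P then y * x else 0)" by simp
lemma iota_if: "\<iota> (if P then a else 0) = (if P then \<iota> a else 0)" by (simp add: iota_zero)
lemma act_if: "actA (if P then a else 0) x = (if P then actA a x else 0)" by simp
lemma act_if_r: "actA a (if P then x else 0) = (if P then actA a x else 0)" by simp

lemma reduce_A:
  assumes P: "presilting sX actA UNIV (a0, b0) (a1, b1) d"
    and i0: "i0 < a0" and j0: "j0 < a1" and u: "fst d i0 j0 \<notin> J"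
  shows "\<exists>d'. presilting sX actA UNIV (a0 - 1, b0) (a1 - 1, b1) d'"
proof -
  obtain v where vu: "v * fst d i0 j0 = 1" and uv: "fst d i0 j0 * v = 1" using notin_J_unit[OF u] by blast
  define N1 :: "('a,'x,'k) tmor" where "N1 = ((\<lambda>i l. if l = i0 then (if i \<noteq> i0 then - (fst d i j0 * v) else 0) else 0),
      (\<lambda>i l. 0), (\<lambda>i l. 0))"
  have N1N1: "mor_eq (a0, b0) (a0, b0) (cmp (a0, b0) N1 N1) zm"
    unfolding mor_eq_def cmp_A cmp_X cmp_k N1_def zm_def by (auto simp: iota_zero intro!: sum.neutral)
  define d1 where "d1 = cmp (a0, b0) (mor_add idm N1) d"
  have P1: "presilting sX actA UNIV (a0, b0) (a1, b1) d1"
    unfolding d1_def by (rule pres_left[OF P nil_inv[OF N1N1]])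
  have d1A: "fst d1 i j = fst d i j + (if i \<noteq> i0 then - (fst d i j0 * v) * fst d i0 j else 0)" if "i < a0" for i j
    unfolding d1_def cmp_A mor_add_def idm_def N1_def using that i0
    by (simp add: distrib_right sum.distrib mult_delta_l if_mult_l sum_delta_nat sum_delta_nat')
  have d1X: "fst (snd d1) i j = fst (snd d) i j + (if i \<noteq> i0 then actA (- (fst d i j0 * v)) (fst (snd d) i0 j) else 0)"
    if "i < a0" for i j
    unfolding d1_def cmp_X mor_add_def idm_def N1_def using that i0
    by (simp add: act_addl sum.distrib act_delta act_if act_if_r iota_delta sum_delta_nat sum_delta_nat' act_one)
  have d1c: "fst d1 i j0 = 0" if "i < a0" "i \<noteq> i0" for i
    using d1A[OF that(1), of j0] that by (simp add: mult.assoc vu)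
  have d1r: "fst d1 i0 j = fst d i0 j" for j using d1A[OF i0] by simp
  have d1rX: "fst (snd d1) i0 j = fst (snd d) i0 j" for j using d1X[OF i0] by simp
  define N2 :: "('a,'x,'k) tmor" where "N2 = ((\<lambda>l j. if l = j0 then (if j \<noteq> j0 then - (v * fst d1 i0 j) else 0) else 0),
      (\<lambda>l j. if l = j0 then - actA v (fst (snd d1) i0 j) else 0), (\<lambda>l j. 0))"
  have N2N2: "mor_eq (a1, b1) (a1, b1) (cmp (a1, b1) N2 N2) zm"
    unfolding mor_eq_def cmp_A cmp_X cmp_k N2_def zm_def by (auto simp: iota_zero intro!: sum.neutral)
  define d2 where "d2 = cmp (a1, b1) d1 (mor_add idm N2)"
  have P2: "presilting sX actA UNIV (a0, b0) (a1, b1) d2"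
    unfolding d2_def by (rule pres_right[OF P1 nil_inv[OF N2N2]])
  have d2A: "fst d2 i j = fst d1 i j + (if j \<noteq> j0 then fst d1 i j0 * - (v * fst d1 i0 j) else 0)" if "j < a1" for i j
    unfolding d2_def cmp_A mor_add_def idm_def N2_def using that j0
    by (simp add: distrib_left sum.distrib mult_delta_r if_mult_r sum_delta_nat sum_delta_nat')
  have d2X: "fst (snd d2) i j = actA (fst d1 i j0) (- actA v (fst (snd d1) i0 j)) + fst (snd d1) i j" if "j < b1" for i j
    unfolding d2_def cmp_X mor_add_def idm_def N2_def using that j0
    by (simp add: act_addl sum.distrib act_delta act_if act_if_r iota_delta sum_delta_nat sum_delta_nat' iota_one iota_zero act_one)
  have r1: "\<forall>j<a1. j \<noteq> j0 \<longrightarrow> fst d2 i0 j = 0"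
    using d2A d1r by (simp add: mult.assoc[symmetric] uv)
  have r2: "\<forall>j<b1. fst (snd d2) i0 j = 0"
    using d2X d1r d1rX by (simp add: act_negr act_mult[symmetric] uv act_one)
  have c1: "\<forall>i<a0. i \<noteq> i0 \<longrightarrow> fst d2 i j0 = 0"
    using d2A[OF j0] d1c by simp
  show ?thesis using del_A[OF P2 i0 j0 r1 r2 c1] by blast
qed

lemma reduce_k:
  assumes P: "presilting sX actA UNIV (a0, b0) (a1, b1) d"
    and i0: "i0 < b0" and j0: "j0 < b1" and c: "snd (snd d) i0 j0 \<noteq> 0"
  shows "\<exists>d'. presilting sX actA UNIV (a0, b0 - 1) (a1, b1 - 1) d'"
proof -
  define c where "c = snd (snd d) i0 j0"
  have c0: "c \<noteq> 0" using c c_def by simp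
  define N1 :: "('a,'x,'k) tmor" where "N1 = ((\<lambda>i l. 0),
      (\<lambda>i l. if l = i0 then - sX (1 / c) (fst (snd d) i j0) else 0),
      (\<lambda>i l. if l = i0 then (if i \<noteq> i0 then - (snd (snd d) i j0 / c) else 0) else 0))"
  have N1N1: "mor_eq (a0, b0) (a0, b0) (cmp (a0, b0) N1 N1) zm"
    unfolding mor_eq_def cmp_A cmp_X cmp_k N1_def zm_def by (auto simp: iota_zero intro!: sum.neutral)
  define d1 where "d1 = cmp (a0, b0) (mor_add idm N1) d"
  have P1: "presilting sX actA UNIV (a0, b0) (a1, b1) d1"
    unfolding d1_def by (rule pres_left[OF P nil_inv[OF N1N1]])
  have d1k: "snd (snd d1) i j = snd (snd d) i j + (if i \<noteq> i0 then - (snd (snd d) i j0 / c) * snd (snd d) i0 j else 0)"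
    if "i < b0" for i j
    unfolding d1_def cmp_k mor_add_def idm_def N1_def using that i0
    by (simp add: distrib_right sum.distrib mult_delta_l if_mult_l sum_delta_nat sum_delta_nat')
  have d1X: "fst (snd d1) i j = fst (snd d) i j + actA (\<iota> (snd (snd d) i0 j)) (- sX (1 / c) (fst (snd d) i j0))"
    if "i < a0" for i j
    unfolding d1_def cmp_X mor_add_def idm_def N1_def using that i0
    by (simp add: act_addl act_addr sum.distrib act_delta act_if act_if_r iota_delta sum_delta_nat sum_delta_nat' act_one)
  have d1c: "snd (snd d1) i j0 = 0" if "i < b0" "i \<noteq> i0" for i
    using d1k[OF that(1), of j0] that c0 by (simp add: c_def)
  have d1cX: "fst (snd d1) i j0 = 0" if "i < a0" for i
    using d1X[OF that, of j0] c0 by (simp add: c_def[symmetric] sX_eq act_negr act_iota_iota iota_one act_one)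
  have d1r: "snd (snd d1) i0 j = snd (snd d) i0 j" for j using d1k[OF i0] by simp
  define N2 :: "('a,'x,'k) tmor" where "N2 = ((\<lambda>l j. 0), (\<lambda>l j. 0),
      (\<lambda>l j. if l = j0 then (if j \<noteq> j0 then - (snd (snd d1) i0 j / c) else 0) else 0))"
  have N2N2: "mor_eq (a1, b1) (a1, b1) (cmp (a1, b1) N2 N2) zm"
    unfolding mor_eq_def cmp_A cmp_X cmp_k N2_def zm_def by (auto simp: iota_zero intro!: sum.neutral)
  define d2 where "d2 = cmp (a1, b1) d1 (mor_add idm N2)"
  have P2: "presilting sX actA UNIV (a0, b0) (a1, b1) d2"
    unfolding d2_def by (rule pres_right[OF P1 nil_inv[OF N2N2]])
  have d2k: "snd (snd d2) i j = snd (snd d1) i j + (if j \<noteq> j0 then snd (snd d1) i j0 * - (snd (snd d1) i0 j / c) else 0)"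
    if "j < b1" for i j
    unfolding d2_def cmp_k mor_add_def idm_def N2_def using that j0
    by (simp add: distrib_left sum.distrib mult_delta_r if_mult_r sum_delta_nat sum_delta_nat')
  have d2X: "fst (snd d2) i j = fst (snd d1) i j + (if j \<noteq> j0 then actA (\<iota> (- (snd (snd d1) i0 j / c))) (fst (snd d1) i j0) else 0)"
    if "j < b1" for i j
    unfolding d2_def cmp_X mor_add_def idm_def N2_def using that j0
    by (simp add: act_addl iota_add sum.distrib act_delta iota_if act_if act_if_r iota_delta sum_delta_nat sum_delta_nat' act_one iota_zero iota_one)
  have r1: "\<forall>j<b1. j \<noteq> j0 \<longrightarrow> snd (snd d2) i0 j = 0"
    using d2k d1r c0 by (simp add: c_def[symmetric])
  have c2: "\<forall>i<a0. fst (snd d2) i j0 = 0"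
    using d2X[OF j0] d1cX by simp
  have c1: "\<forall>i<b0. i \<noteq> i0 \<longrightarrow> snd (snd d2) i j0 = 0"
    using d2k[OF j0] d1c by simp
  show ?thesis using del_k[OF P2 i0 j0 r1 c2 c1] by blast
qed

end


context setting begin

lemma J_sum: "(\<And>l. l < (n::nat) \<Longrightarrow> F l \<in> J) \<Longrightarrow> (\<Sum>l<n. F l) \<in> J"
  by (induct n) (auto intro: J_add simp: J_0)

definition minimal where
  "minimal a0 b0 a1 b1 d \<longleftrightarrow> (\<forall>i<a0. \<forall>j<a1. fst d i j \<in> J) \<and> (\<forall>i<b0. \<forall>j<b1. snd (snd d) i j = (0::'k))"

lemma minimal_exists:
  "presilting sX actA UNIV (a0, b0) (a1, b1) d \<Longrightarrow>
   \<exists>a0' b0' a1' b1' d'. presilting sX actA UNIV (a0', b0') (a1', b1') d' \<and>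
     int a0' - int a1' = int a0 - int a1 \<and> int b0' - int b1' = int b0 - int b1 \<and>
     minimal a0' b0' a1' b1' d'"
proof (induction "a0 + a1 + b0 + b1" arbitrary: a0 b0 a1 b1 d rule: less_induct)
  case less
  show ?case
  proof (cases "minimal a0 b0 a1 b1 d")
    case True
    then show ?thesis using less.prems by blast
  next
    case False
    then consider (A) i0 j0 where "i0 < a0" "j0 < a1" "fst d i0 j0 \<notin> J"
      | (K) i0 j0 where "i0 < b0" "j0 < b1" "snd (snd d) i0 j0 \<noteq> 0"
      unfolding minimal_def by blast
    then show ?thesis
    proof cases
      case A
      obtain d' where d': "presilting sX actA UNIV (a0 - 1, b0) (a1 - 1, b1) d'"
        using reduce_A[OF less.prems A] by blast
      have "a0 - 1 + (a1 - 1) + b0 + b1 < a0 + a1 + b0 + b1" using A by simp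
      from less.hyps[OF this d'] show ?thesis using A by auto
    next
      case K
      obtain d' where d': "presilting sX actA UNIV (a0, b0 - 1) (a1, b1 - 1) d'"
        using reduce_k[OF less.prems K] by blast
      have "a0 + a1 + (b0 - 1) + (b1 - 1) < a0 + a1 + b0 + b1" using K by simp
      from less.hyps[OF this d'] show ?thesis using K by auto
    qed
  qed
qed

lemma minimal_shape:
  assumes P: "presilting sX actA UNIV (a0, b0) (a1, b1) d" and M: "minimal a0 b0 a1 b1 d"
  shows "(a0 = 0 \<or> a1 = 0) \<and> (b0 = 0 \<or> b1 = 0)"
proof (intro conjI)
  show "a0 = 0 \<or> a1 = 0"
  proof (rule ccontr)
    assume "\<not> (a0 = 0 \<or> a1 = 0)"
    then have a: "0 < a0" "0 < a1" by auto
    obtain g h where gh: "mor_eq (a1, b1) (a0, b0) ((\<lambda>i j. 1), (\<lambda>i j. 0), (\<lambda>i j. 0))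
        (mor_add (cmp (a0, b0) g d) (cmp (a1, b1) d h))"
      using P unfolding pres_UNIV by blast
    then have "\<forall>i<a0. \<forall>j<a1. (1::'a) = (\<Sum>l<a0. fst g i l * fst d l j) + (\<Sum>l<a1. fst d i l * fst h l j)"
      unfolding mor_eq_def mor_add_def cmp_A by simp
    then have "(1::'a) = (\<Sum>l<a0. fst g 0 l * fst d l 0) + (\<Sum>l<a1. fst d 0 l * fst h l 0)"
      using a by blast
    moreover have "(\<Sum>l<a0. fst g 0 l * fst d l 0) \<in> J"
      using M a unfolding minimal_def by (intro J_sum J_lmult) auto
    moreover have "(\<Sum>l<a1. fst d 0 l * fst h l 0) \<in> J"
      using M a unfolding minimal_def by (intro J_sum J_rmult) auto
    ultimately show False using J_add one_notin_J by (metis (no_types, lifting))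
  qed
  show "b0 = 0 \<or> b1 = 0"
  proof (rule ccontr)
    assume "\<not> (b0 = 0 \<or> b1 = 0)"
    then have b: "0 < b0" "0 < b1" by auto
    obtain g h where gh: "mor_eq (a1, b1) (a0, b0) ((\<lambda>i j. 0), (\<lambda>i j. 0), (\<lambda>i j. 1))
        (mor_add (cmp (a0, b0) g d) (cmp (a1, b1) d h))"
      using P unfolding pres_UNIV by blast
    then have "\<forall>i<b0. \<forall>j<b1. (1::'k) = (\<Sum>l<b0. snd (snd g) i l * snd (snd d) l j) + (\<Sum>l<b1. snd (snd d) i l * snd (snd h) l j)"
      unfolding mor_eq_def mor_add_def cmp_k by simp
    then have "(1::'k) = (\<Sum>l<b0. snd (snd g) 0 l * snd (snd d) l 0) + (\<Sum>l<b1. snd (snd d) 0 l * snd (snd h) l 0)"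
      using b by blast
    moreover have "(\<Sum>l<b0. snd (snd g) 0 l * snd (snd d) l 0) = 0"
      using M b unfolding minimal_def by (intro sum.neutral) auto
    moreover have "(\<Sum>l<b1. snd (snd d) 0 l * snd (snd h) l 0) = 0"
      using M b unfolding minimal_def by (intro sum.neutral) auto
    ultimately show False by simp
  qed
qed

lemma rigid_vec:
  assumes R: "rigid sX actA UNIV (1, - int t)"
  shows "\<exists>y. \<forall>z. \<exists>g H. \<forall>j<t. z j = actA g (y j) + (\<Sum>l<t. actA (\<iota> (H l j)) (y l))"
proof -
  obtain t0 t1 d where P0: "presilting sX actA UNIV t0 t1 d" and e1: "1 = int (fst t0) - int (fst t1)"
    and e2: "- int t = int (snd t0) - int (snd t1)" using R unfolding rigid_def by auto
  obtain a0 b0 where t0: "t0 = (a0, b0)" by (cases t0)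
  obtain a1 b1 where t1: "t1 = (a1, b1)" by (cases t1)
  obtain a0' b0' a1' b1' d' where P: "presilting sX actA UNIV (a0', b0') (a1', b1') d'"
    and f1: "int a0' - int a1' = int a0 - int a1" and f2: "int b0' - int b1' = int b0 - int b1"
    and M: "minimal a0' b0' a1' b1' d'"
    using minimal_exists[OF P0[unfolded t0 t1]] by blast
  have sh: "(a0' = 0 \<or> a1' = 0) \<and> (b0' = 0 \<or> b1' = 0)" by (rule minimal_shape[OF P M])
  have a: "a0' = 1" "a1' = 0" using sh f1 e1 t0 t1 by auto
  have b: "b0' = 0" "b1' = t" using sh f2 e2 t0 t1 by auto
  have P': "presilting sX actA UNIV (1, 0) (0, t) d'" using P a b by simp
  show ?thesis
  proof (rule exI[where x="\<lambda>j. fst (snd d') 0 j"], rule allI)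
    fix z :: "nat \<Rightarrow> 'x"
    obtain g h where gh: "mor_eq (0, t) (1, 0) ((\<lambda>i j. 0), (\<lambda>i j. z j), (\<lambda>i j. 0))
        (mor_add (cmp (1, 0) g d') (cmp (0, t) d' h))"
      using P' unfolding pres_UNIV by blast
    then have "\<forall>j<t. z j = actA (fst g 0 0) (fst (snd d') 0 j) + (\<Sum>l<t. actA (\<iota> (snd (snd h) l j)) (fst (snd d') 0 l))"
      unfolding mor_eq_def mor_add_def cmp_X by simp
    then show "\<exists>g H. \<forall>j<t. z j = actA g (fst (snd d') 0 j) + (\<Sum>l<t. actA (\<iota> (H l j)) (fst (snd d') 0 l))"
      by blast
  qed
qed

end


context setting begin

lemma part_a:
  assumes R: "rigid sX actA UNIV (1, -1)"
  shows "\<exists>h. \<forall>x. \<exists>a. x = actA a h"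
proof -
  have "rigid sX actA UNIV (1, - int 1)" using R by simp
  from rigid_vec[OF this] obtain y :: "nat \<Rightarrow> 'x"
    where y: "\<forall>z. \<exists>g H. \<forall>j<1. z j = actA g (y j) + (\<Sum>l<1. actA (\<iota> (H l j)) (y l))"
    by blast
  have "\<exists>a. x = actA a (y 0)" for x
  proof -
    obtain g H where "\<forall>j<1. x = actA g (y j) + (\<Sum>l<1. actA (\<iota> (H l j)) (y l))"
      using y[rule_format, of "\<lambda>_. x"] by blast
    then have "x = actA g (y 0) + actA (\<iota> (H 0 0)) (y 0)" by simp
    then have "x = actA (g + \<iota> (H 0 0)) (y 0)" by (simp add: act_addl)
    then show ?thesis by blast
  qed
  then show ?thesis by blast
qed

lemma JX_act: "x \<in> JX actA \<Longrightarrow> actA a x \<in> JX actA"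
proof (induction rule: JX.induct)
  case JX_zero
  then show ?case by (simp add: JX.JX_zero)
next
  case (JX_gen b x)
  then have "a * b \<in> J" by (rule J_lmult)
  then show ?case by (simp add: act_mult[symmetric] JX.JX_gen)
next
  case (JX_add u v)
  then show ?case by (simp add: act_addr JX.JX_add)
qed

lemma JX_neg: "x \<in> JX actA \<Longrightarrow> - x \<in> JX actA"
  using JX_act[of x "- 1"] by (simp add: act_negl act_one)

lemma JX_diff: "x \<in> JX actA \<Longrightarrow> y \<in> JX actA \<Longrightarrow> x - y \<in> JX actA"
  using JX.JX_add[OF _ JX_neg[of y]] by (simp add: diff_conv_add_uminus del: add_uminus_conv_diff)

lemma JX_sum: "(\<And>l. l < (n::nat) \<Longrightarrow> F l \<in> JX actA) \<Longrightarrow> (\<Sum>l<n. F l) \<in> JX actA"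
  by (induct n) (auto intro: JX.JX_add JX.JX_zero)

lemma JX_e:
  assumes gen: "\<forall>x. \<exists>a. x = actA a e"
  shows "x \<in> JX actA \<Longrightarrow> \<exists>j\<in>J. x = actA j e"
proof (induction rule: JX.induct)
  case JX_zero
  have "0 = actA 0 e" by simp
  then show ?case using J_0 by blast
next
  case (JX_gen a x)
  obtain b where "x = actA b e" using gen by blast
  then have "actA a x = actA (a * b) e" by (simp add: act_mult)
  moreover have "a * b \<in> J" using JX_gen J_rmult by blast
  ultimately show ?case by blast
next
  case (JX_add u v)
  then obtain j1 j2 where "j1 \<in> J" "u = actA j1 e" "j2 \<in> J" "v = actA j2 e" by blast
  then have "u + v = actA (j1 + j2) e" "j1 + j2 \<in> J" using J_add by (auto simp: act_addl)
  then show ?case by blast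
qed

lemma e_JX_zero:
  fixes x :: 'x
  assumes gen: "\<forall>x. \<exists>a. x = actA a e" and eJ: "e \<in> JX actA"
  shows "x = 0"
proof -
  obtain j where j: "j \<in> J" "e = actA j e" using JX_e[OF gen eJ] by blast
  have "actA (1 - j) e = 0" using j by (simp add: act_diffl act_one)
  moreover have "1 - j \<notin> J"
  proof
    assume "1 - j \<in> J"
    then have "(1 - j) + j \<in> J" using j J_add by blast
    then show False using one_notin_J by simp
  qed
  then obtain w where w: "w * (1 - j) = 1" using notin_J_unit by blast
  ultimately have "e = 0" by (metis act_mult act_one act_zeror)
  obtain a where "x = actA a e" using gen by blast
  then show ?thesis using \<open>e = 0\<close> by simp
qed

lemma key_alg:
  fixes y w :: "nat \<Rightarrow> 'x" and ym :: 'x and H :: "nat \<Rightarrow> nat \<Rightarrow> 'k" and \<kappa> :: "nat \<Rightarrow> 'k"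
  assumes Zm: "0 = actA g ym + (\<Sum>l<n. actA (\<iota> (H l m)) (y l))"
    and yl: "\<And>l. y l = w l + actA (\<iota> (\<kappa> l)) ym"
  shows "actA g (y i) + (\<Sum>l<n. actA (\<iota> (H l i)) (y l)) =
    actA g (w i) + (\<Sum>l<n. actA (\<iota> (H l i - H l m * \<kappa> i)) (w l))
    + actA (\<iota> ((\<Sum>l<n. H l i * \<kappa> l) - (\<Sum>l<n. H l m * \<kappa> l) * \<kappa> i)) ym"
proof -
  have S: "(\<Sum>l<n. actA (\<iota> (H l p)) (y l)) = (\<Sum>l<n. actA (\<iota> (H l p)) (w l)) + actA (\<iota> (\<Sum>l<n. H l p * \<kappa> l)) ym" for p
    by (simp add: yl act_addr sum.distrib act_iota_iota iota_sum act_suml mult.commute)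
  have G: "actA g ym = - (\<Sum>l<n. actA (\<iota> (H l m)) (y l))"
    using Zm[symmetric] by (simp add: eq_neg_iff_add_eq_0)
  have Y: "actA g (y i) = actA g (w i) + actA (\<iota> (\<kappa> i)) (actA g ym)"
    by (simp add: yl act_addr act_iota_comm)
  have T1: "actA (\<iota> (\<kappa> i)) (\<Sum>l<n. actA (\<iota> (H l m)) (w l)) = (\<Sum>l<n. actA (\<iota> (H l m * \<kappa> i)) (w l))"
    by (simp add: act_sumr act_iota_iota mult.commute)
  have T2: "actA (\<iota> (\<kappa> i)) (actA (\<iota> (\<Sum>l<n. H l m * \<kappa> l)) ym) = actA (\<iota> ((\<Sum>l<n. H l m * \<kappa> l) * \<kappa> i)) ym"
    by (simp add: act_iota_iota)
  have R1: "(\<Sum>l<n. actA (\<iota> (H l i - H l m * \<kappa> i)) (w l)) =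
     (\<Sum>l<n. actA (\<iota> (H l i)) (w l)) - (\<Sum>l<n. actA (\<iota> (H l m * \<kappa> i)) (w l))"
    by (simp add: iota_diff act_diffl sum_subtractf)
  have R2: "actA (\<iota> ((\<Sum>l<n. H l i * \<kappa> l) - (\<Sum>l<n. H l m * \<kappa> l) * \<kappa> i)) ym =
     actA (\<iota> (\<Sum>l<n. H l i * \<kappa> l)) ym - actA (\<iota> ((\<Sum>l<n. H l m * \<kappa> l) * \<kappa> i)) ym"
    by (simp only: iota_diff act_diffl)
  show ?thesis
    unfolding Y G S[of m] S[of i] R1 R2 act_negr act_addr T1 T2
    by (simp add: algebra_simps)
qed

lemma pres_JX_vec:
  fixes y' :: "nat \<Rightarrow> 'x"
  assumes n: "1 \<le> n" and yJ: "\<forall>j<n - 1. y' j \<in> JX actA"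
    and C: "\<forall>z. (\<forall>j<n - 1. z j \<in> JX actA) \<longrightarrow>
       (\<exists>g H. \<forall>j<n - 1. z j = actA g (y' j) + (\<Sum>l<n - 1. actA (\<iota> (H l j)) (y' l)))"
  shows "rigid sX actA (JX actA) (1, 1 - int n)"
proof -
  let ?d = "((\<lambda>i j. 0), (\<lambda>i j. y' j), (\<lambda>i j. 0)) :: ('a,'x,'k) tmor"
  have P: "presilting sX actA (JX actA) (1, 0) (0, n - 1) ?d"
    unfolding presilting_def
  proof (intro conjI allI impI)
    show "is_mor (JX actA) (0, n - 1) (1, 0) ?d" using yJ unfolding is_mor_def by simp
  next
    fix f :: "('a,'x,'k) tmor" assume "is_mor (JX actA) (0, n - 1) (1, 0) f"
    then have "\<forall>j<n - 1. fst (snd f) 0 j \<in> JX actA" unfolding is_mor_def by simp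
    then obtain g H where gH: "\<forall>j<n - 1. fst (snd f) 0 j = actA g (y' j) + (\<Sum>l<n - 1. actA (\<iota> (H l j)) (y' l))"
      using C by blast
    let ?g = "((\<lambda>i j. g), (\<lambda>i j. 0), (\<lambda>i j. 0)) :: ('a,'x,'k) tmor"
    let ?h = "((\<lambda>i j. 0), (\<lambda>i j. 0), (\<lambda>i j. H i j)) :: ('a,'x,'k) tmor"
    have "is_mor (JX actA) (1, 0) (1, 0) ?g \<and> is_mor (JX actA) (0, n - 1) (0, n - 1) ?h \<and>
        mor_eq (0, n - 1) (1, 0) f (mor_add (mor_comp sX actA (1, 0) ?g ?d) (mor_comp sX actA (0, n - 1) ?d ?h))"
      unfolding is_mor_def mor_eq_def mor_add_def cmp_A cmp_X cmp_k using gH by simp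
    then show "\<exists>g h. is_mor (JX actA) (1, 0) (1, 0) g \<and> is_mor (JX actA) (0, n - 1) (0, n - 1) h \<and>
        mor_eq (0, n - 1) (1, 0) f (mor_add (mor_comp sX actA (1, 0) g ?d) (mor_comp sX actA (0, n - 1) ?d h))"
      by blast
  qed
  have e: "1 - int n = int 0 - int (n - 1)" using n by simp
  show ?thesis unfolding rigid_def
    by (rule exI[where x="(1, 0)"], rule exI[where x="(0, n - 1)"], rule exI[where x="?d"]) (intro conjI, rule P, simp, simp only: snd_conv fst_conv e)
qed

lemma JX_rhs: "(\<And>l. l < (n::nat) \<Longrightarrow> y l \<in> JX actA) \<Longrightarrow> j < n \<Longrightarrow> actA g (y j) + (\<Sum>l<n. actA (\<iota> (H l j)) (y l)) \<in> JX actA"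
proof -
  assume a: "\<And>l. l < n \<Longrightarrow> y l \<in> JX actA" and j: "j < n"
  have "(\<Sum>l<n. actA (\<iota> (H l j)) (y l)) \<in> JX actA"
    by (rule JX_sum) (rule JX_act, rule a)
  then show "actA g (y j) + (\<Sum>l<n. actA (\<iota> (H l j)) (y l)) \<in> JX actA"
    using JX_act[OF a[OF j]] by (rule JX.JX_add[rotated])
qed

lemma part_b:
  fixes e :: 'x and y :: "nat \<Rightarrow> 'x" and n :: nat
  assumes gen: "\<forall>x. \<exists>a. x = actA a e" and n: "1 \<le> n"
    and Cy: "\<forall>z. \<exists>g H. \<forall>j<n. z j = actA g (y j) + (\<Sum>l<n. actA (\<iota> (H l j)) (y l))"
  shows "rigid sX actA (JX actA) (1, 1 - int n)"
proof (cases "\<forall>x::'x. x = 0")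
  case True
  show ?thesis
  proof (rule pres_JX_vec[OF n, where y'="\<lambda>_. 0"])
    show "\<forall>j<n - 1. (0::'x) \<in> JX actA" by (simp add: JX.JX_zero)
    show "\<forall>z. (\<forall>j<n - 1. z j \<in> JX actA) \<longrightarrow>
       (\<exists>g H. \<forall>j<n - 1. z j = actA g 0 + (\<Sum>l<n - 1. actA (\<iota> (H l j)) 0))"
    proof (intro allI impI exI)
      fix z :: "nat \<Rightarrow> 'x" and j :: nat
      show "z j = actA 0 0 + (\<Sum>l<n - 1. actA (\<iota> 0) 0)" using True by metis
    qed
  qed
next
  case False
  have eJ: "e \<notin> JX actA" using False e_JX_zero[OF gen] by blast
  have "\<forall>l. \<exists>b. y l = actA b e" using gen by blast
  then obtain a where ya: "\<And>l. y l = actA (a l) e" by metis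
  have "\<forall>l. \<exists>c. a l - \<iota> c \<in> J" using res unfolding residue_field_is_k_def by blast
  then obtain c where ca: "\<And>l. a l - \<iota> (c l) \<in> J" by metis
  have "\<exists>m<n. c m \<noteq> 0"
  proof (rule ccontr)
    assume "\<not> (\<exists>m<n. c m \<noteq> 0)"
    then have "\<And>l. l < n \<Longrightarrow> y l \<in> JX actA"
    proof -
      fix l assume "\<not> (\<exists>m<n. c m \<noteq> 0)" "l < n"
      then have "c l = 0" by blast
      then have "a l \<in> J" using ca[of l] by (simp add: iota_zero)
      then show "y l \<in> JX actA" unfolding ya by (rule JX.JX_gen)
    qed
    moreover obtain g H where gH: "\<forall>j<n. e = actA g (y j) + (\<Sum>l<n. actA (\<iota> (H l j)) (y l))"
      using Cy[rule_format, of "\<lambda>_. e"] by blast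
    moreover have "e = actA g (y 0) + (\<Sum>l<n. actA (\<iota> (H l 0)) (y l))" using gH n by simp
    ultimately have "e \<in> JX actA" using JX_rhs[of n y 0 g H] n by simp
    then show False using eJ by blast
  qed
  then obtain m where m: "m < n" "c m \<noteq> 0" by blast
  have am: "a m \<notin> J"
  proof
    assume "a m \<in> J"
    then have "a m - (a m - \<iota> (c m)) \<in> J" using ca J_diff by blast
    then have "\<iota> (1 / c m) * \<iota> (c m) \<in> J" using J_lmult by simp
    then show False using m one_notin_J by (simp add: iota_mult[symmetric] iota_one)
  qed
  obtain w where w: "w * a m = 1" using notin_J_unit[OF am] by blast
  define \<kappa> where "\<kappa> l = c l / c m" for l
  define wv where "wv l = y l - actA (\<iota> (\<kappa> l)) (y m)" for l
  define y' where "y' j = wv (skip m j)" for j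
  have F1: "wv l \<in> JX actA" for l
  proof -
    have "wv l = actA (a l - \<iota> (\<kappa> l) * a m) e"
      unfolding wv_def ya by (simp add: act_diffl act_mult)
    moreover have "a l - \<iota> (\<kappa> l) * a m = (a l - \<iota> (c l)) - \<iota> (\<kappa> l) * (a m - \<iota> (c m))"
    proof -
      have "\<iota> (\<kappa> l) * \<iota> (c m) = \<iota> (c l)" using m by (simp add: iota_mult[symmetric] \<kappa>_def)
      then show ?thesis by (simp add: algebra_simps)
    qed
    moreover have "(a l - \<iota> (c l)) - \<iota> (\<kappa> l) * (a m - \<iota> (c m)) \<in> J"
      using ca J_diff J_lmult by blast
    ultimately show ?thesis by (simp add: JX.JX_gen)
  qed
  have F2: "wv m = 0" unfolding wv_def \<kappa>_def using m by (simp add: iota_one act_one)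
  have F3: "actA (\<iota> \<mu>) (y m) = 0" if "actA (\<iota> \<mu>) (y m) \<in> JX actA" for \<mu>
  proof (cases "\<mu> = 0")
    case True
    then show ?thesis by (simp add: iota_zero)
  next
    case False
    have "actA (\<iota> (1 / \<mu>)) (actA (\<iota> \<mu>) (y m)) = y m"
      using False by (simp add: act_iota_iota iota_one act_one)
    then have "y m \<in> JX actA" using JX_act[OF that, of "\<iota> (1 / \<mu>)"] by simp
    then have "actA w (y m) \<in> JX actA" by (rule JX_act)
    moreover have "actA w (y m) = e" unfolding ya by (simp add: act_mult[symmetric] w act_one)
    ultimately show ?thesis using eJ by simp
  qed
  have yl: "y l = wv l + actA (\<iota> (\<kappa> l)) (y m)" for l unfolding wv_def by simp
  show ?thesis
  proof (rule pres_JX_vec[OF n, where y'=y'])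
    show "\<forall>j<n - 1. y' j \<in> JX actA" unfolding y'_def using F1 by blast
    show "\<forall>z. (\<forall>j<n - 1. z j \<in> JX actA) \<longrightarrow>
       (\<exists>g H. \<forall>j<n - 1. z j = actA g (y' j) + (\<Sum>l<n - 1. actA (\<iota> (H l j)) (y' l)))"
    proof (intro allI impI)
      fix z :: "nat \<Rightarrow> 'x" assume zJ: "\<forall>j<n - 1. z j \<in> JX actA"
      define Z where "Z i = (if i = m then 0 else z (unskip m i))" for i
      obtain g H where gH: "\<forall>i<n. Z i = actA g (y i) + (\<Sum>l<n. actA (\<iota> (H l i)) (y l))"
        using Cy by blast
      have Zm: "0 = actA g (y m) + (\<Sum>l<n. actA (\<iota> (H l m)) (y l))"
        using gH m unfolding Z_def by auto
      define H' where "H' l j = H (skip m l) (skip m j) - H (skip m l) m * \<kappa> (skip m j)" for l j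
      have "z j = actA g (y' j) + (\<Sum>l<n - 1. actA (\<iota> (H' l j)) (y' l))" if j: "j < n - 1" for j
      proof -
        define i where "i = skip m j"
        have i: "i < n" "i \<noteq> m" "Z i = z j" unfolding i_def Z_def using skip_less[OF m(1) j] by auto
        define \<mu> where "\<mu> = (\<Sum>l<n. H l i * \<kappa> l) - (\<Sum>l<n. H l m * \<kappa> l) * \<kappa> i"
        have "z j = actA g (y i) + (\<Sum>l<n. actA (\<iota> (H l i)) (y l))" using gH i by auto
        also have "... = actA g (wv i) + (\<Sum>l<n. actA (\<iota> (H l i - H l m * \<kappa> i)) (wv l)) + actA (\<iota> \<mu>) (y m)"
          unfolding \<mu>_def by (rule key_alg[where y=y and w=wv and \<kappa>=\<kappa> and ym="y m" and H=H and g=g and m=m and n=n, OF Zm yl])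
        also have "(\<Sum>l<n. actA (\<iota> (H l i - H l m * \<kappa> i)) (wv l)) = (\<Sum>l<n - 1. actA (\<iota> (H' l j)) (y' l))"
          unfolding sum_skip[OF m(1)] F2 H'_def y'_def i_def by simp
        finally have zj: "z j = actA g (y' j) + (\<Sum>l<n - 1. actA (\<iota> (H' l j)) (y' l)) + actA (\<iota> \<mu>) (y m)"
          unfolding y'_def i_def .
        have "actA (\<iota> \<mu>) (y m) = z j - (actA g (y' j) + (\<Sum>l<n - 1. actA (\<iota> (H' l j)) (y' l)))"
          using zj by (simp add: algebra_simps)
        moreover have "z j - (actA g (y' j) + (\<Sum>l<n - 1. actA (\<iota> (H' l j)) (y' l))) \<in> JX actA"
          using zJ j JX_rhs[of "n - 1" y' j g H'] F1 unfolding y'_def by (intro JX_diff) auto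
        ultimately have "actA (\<iota> \<mu>) (y m) \<in> JX actA" by simp
        then have "actA (\<iota> \<mu>) (y m) = 0" by (rule F3)
        then show ?thesis using zj by simp
      qed
      then show "\<exists>g H. \<forall>j<n - 1. z j = actA g (y' j) + (\<Sum>l<n - 1. actA (\<iota> (H l j)) (y' l))" by blast
    qed
  qed
qed

end

theorem lemma3p15:
  fixes sA :: "'k::field \<Rightarrow> 'a::ring_1 \<Rightarrow> 'a"
    and sX :: "'k \<Rightarrow> 'x::ab_group_add \<Rightarrow> 'x"
    and actA :: "'a \<Rightarrow> 'x \<Rightarrow> 'x"
  assumes "k_algebra sA" and "fin_dim sA"
    and "local_ring TYPE('a)" and "residue_field_is_k sA"
    and "bimodule sA sX actA" and "fin_dim sX"
    and "rigid sX actA UNIV (1, -1)"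
  shows "(\<exists>h. \<forall>x. \<exists>a. x = actA a h) \<and>
         (\<forall>t::int. t \<ge> 1 \<longrightarrow> rigid sX actA UNIV (1, - t) \<longrightarrow> rigid sX actA (JX actA) (1, 1 - t))"
proof -
  interpret S: setting sA sX actA
    by (rule setting.intro) (use assms in auto)
  obtain h where h: "\<forall>x. \<exists>a. x = actA a h" using S.part_a[OF assms(7)] by blast
  have b: "rigid sX actA (JX actA) (1, 1 - t)" if t: "t \<ge> 1" and R: "rigid sX actA UNIV (1, - t)" for t :: int
  proof -
    define n where "n = nat t"
    have tn: "t = int n" and n: "1 \<le> n" using t unfolding n_def by auto
    have "rigid sX actA UNIV (1, - int n)" using R tn by simp
    from S.rigid_vec[OF this] obtain y :: "nat \<Rightarrow> 'x" where
      "\<forall>z. \<exists>g H. \<forall>j<n. z j = actA g (y j) + (\<Sum>l<n. actA (sA (H l j) 1) (y l))" by blast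
    from S.part_b[OF h n this] show ?thesis using tn by simp
  qed
  show ?thesis using h b by blast
qed

end
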